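(* Let $n_1,\dots,n_l\ge2$ be integers, and suppose there are integers $1\le j\le k\le l-1$ such that $n_j\ge3$ and $u_j+u_{j+1}+v_j+v_{j+1}\le q$. Let $(n_1',\dots,n_l')$ be obtained from $(n_1,\dots,n_l)$ by replacing $n_k$ by $n_k+1$, and let $q',u_i',v_i'$ be the corresponding quantities for $(n_1',\dots,n_l')$. Then $u_j'+u_{j+1}'+v_j'+v_{j+1}'\le q'$.
   Context: For integers $m_1,\dots,m_r\ge2$, $|[m_1,\dots,m_r]|$ is the absolute value of the determinant of the tridiagonal $r\times r$ matrix with diagonal entries $-m_1,\dots,-m_r$ and $1$'s directly above and below the diagonal (empty bracket $=1$). For $(n_1,\dots,n_l)$: $q=|[n_1,\dots,n_l]|$; $u_0=0$, $u_1=1$, $u_s=|[n_1,\dots,n_{s-1}]|$ for $2\le s\le l+1$; $v_s=|[n_{s+1},\dots,n_l]|$ for $0\le s\le l-1$, $v_l=1$, $v_{l+1}=0$. *)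

theory Defs
  imports "Jordan_Normal_Form.Determinant"
begin

definition tri_mat :: "int list \<Rightarrow> int mat" where
  "tri_mat ms = mat (length ms) (length ms)
     (\<lambda>(i, j). if i = j then - (ms ! i)
              else if i = j + 1 \<or> j = i + 1 then 1 else 0)"

text \<open>|[m_1,...,m_r]|; the empty bracket is the determinant of the 0x0 matrix, i.e. 1.\<close>
definition bracket :: "int list \<Rightarrow> int" where
  "bracket ms = \<bar>det (tri_mat ms)\<bar>"

text \<open>For ns = (n_1,...,n_l): u_0 = 0, u_s = |[n_1,...,n_{s-1}]| (so u_1 = 1).\<close>
definition u_seq :: "int list \<Rightarrow> nat \<Rightarrow> int" where
  "u_seq ns s = (if s = 0 then 0 else bracket (take (s - 1) ns))"

text \<open>v_s = |[n_{s+1},...,n_l]| for s \<le> l (so v_l = 1), v_{l+1} = 0.\<close>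
definition v_seq :: "int list \<Rightarrow> nat \<Rightarrow> int" where
  "v_seq ns s = (if s > length ns then 0 else bracket (drop s ns))"

end

theory Submission imports Defs begin

fun cont :: "int list \<Rightarrow> int" where
  "cont [] = 1" | "cont [a] = a" | "cont (a#b#ms) = a * cont (b#ms) - cont ms"

lemma det_00: "A \<in> carrier_mat 0 0 \<Longrightarrow> det A = 1"
  by (simp add: det_def)

lemma tri_idx: "i < length ms \<Longrightarrow> j < length ms \<Longrightarrow> tri_mat ms $$ (i,j) =
  (if i = j then - (ms ! i) else if i = j + 1 \<or> j = i + 1 then 1 else 0)"
  by (simp add: tri_mat_def)

lemma tri_dim[simp]: "dim_row (tri_mat ms) = length ms" "dim_col (tri_mat ms) = length ms"
  by (simp_all add: tri_mat_def)

lemma tri_carrier: "tri_mat ms \<in> carrier_mat (length ms) (length ms)"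
  by (simp add: tri_mat_def)

lemma md_idx: "i < dim_row A - 1 \<Longrightarrow> j < dim_col A - 1 \<Longrightarrow> mat_delete A r c $$ (i,j) =
   A $$ (if i < r then i else Suc i, if j < c then j else Suc j)"
  by (simp add: mat_delete_def)

lemma sum2: "(\<Sum>i<Suc (Suc m). f i) = f 0 + f 1 + (\<Sum>i<m. f (Suc (Suc i)))" for f :: "nat \<Rightarrow> int"
  by (subst sum.lessThan_Suc_shift, subst sum.lessThan_Suc_shift) simp

lemma det_tri: "det (tri_mat ms) = (-1)^length ms * cont ms"
proof (induction ms rule: cont.induct)
  case 1
  then show ?case using tri_carrier[of "[]"] det_00 by simp
next
  case (2 a)
  have "det (tri_mat [a]) = (\<Sum>i<length [a]. tri_mat [a] $$ (i,0) * cofactor (tri_mat [a]) i 0)"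
    by (rule laplace_expansion_column[OF tri_carrier[of "[a]"]]) simp
  also have "\<dots> = - a"
    by (simp add: tri_idx cofactor_def det_00 mat_delete_carrier[OF tri_carrier[of "[a]"], simplified])
  finally show ?case by simp
next
  case (3 a b ms)
  define M where "M = tri_mat (a#b#ms)"
  define l where "l = length ms"
  have MC: "M \<in> carrier_mat (Suc (Suc l)) (Suc (Suc l))" using tri_carrier[of "a#b#ms"] by (simp add: M_def l_def)
  have Mi: "i < Suc (Suc l) \<Longrightarrow> j < Suc (Suc l) \<Longrightarrow> M $$ (i,j) =
    (if i = j then - ((a#b#ms) ! i) else if i = j + 1 \<or> j = i + 1 then 1 else 0)" for i j
    unfolding M_def by (rule tri_idx) (simp_all add: l_def)
  have "det M = (\<Sum>i<Suc (Suc l). M $$ (i,0) * cofactor M i 0)"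
    by (rule laplace_expansion_column[OF MC]) simp
  also have "\<dots> = M $$ (0,0) * cofactor M 0 0 + M $$ (1,0) * cofactor M 1 0"
    unfolding sum2 by (simp add: Mi)
  also have "M $$ (0,0) = -a" by (simp add: Mi)
  also have "M $$ (1,0) = 1" by (simp add: Mi)
  finally have dM: "det M = - a * cofactor M 0 0 + 1 * cofactor M 1 0" .
  have MD: "dim_row M = Suc (Suc l)" "dim_col M = Suc (Suc l)" using MC by auto
  have d0: "mat_delete M 0 0 = tri_mat (b#ms)"
  proof (rule eq_matI)
    fix i j assume "i < dim_row (tri_mat (b#ms))" "j < dim_col (tri_mat (b#ms))"
    then show "mat_delete M 0 0 $$ (i,j) = tri_mat (b#ms) $$ (i,j)"
      by (simp add: md_idx MD Mi tri_idx l_def)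
  qed (simp_all add: MD l_def)
  have d1: "det (mat_delete M 1 0) = det (tri_mat ms)"
  proof -
    define N where "N = mat_delete M 1 0"
    have ND: "dim_row N = Suc l" "dim_col N = Suc l" by (simp_all add: N_def MD)
    have NC: "N \<in> carrier_mat (Suc l) (Suc l)" using ND by auto
    have Ni: "i < Suc l \<Longrightarrow> j < Suc l \<Longrightarrow> N $$ (i,j) = M $$ (if i < 1 then i else Suc i, Suc j)" for i j
      unfolding N_def by (subst md_idx) (simp_all add: MD)
    have "det N = (\<Sum>j<Suc l. N $$ (0,j) * cofactor N 0 j)"
      by (rule laplace_expansion_row[OF NC]) simp
    also have "\<dots> = N $$ (0,0) * cofactor N 0 0 + (\<Sum>j<l. N $$ (0,Suc j) * cofactor N 0 (Suc j))"
      by (subst sum.lessThan_Suc_shift) simp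
    also have "(\<Sum>j<l. N $$ (0,Suc j) * cofactor N 0 (Suc j)) = 0"
      by (rule sum.neutral) (simp add: Ni Mi)
    also have "N $$ (0,0) = 1" by (simp add: Ni Mi)
    finally have dN: "det N = 1 * cofactor N 0 0" by simp
    have "mat_delete N 0 0 = tri_mat ms"
    proof (rule eq_matI)
      fix i j assume "i < dim_row (tri_mat ms)" "j < dim_col (tri_mat ms)"
      then show "mat_delete N 0 0 $$ (i,j) = tri_mat ms $$ (i,j)"
        by (simp add: md_idx ND Ni Mi tri_idx l_def)
    qed (simp_all add: ND l_def)
    then show ?thesis using dN by (simp add: N_def cofactor_def)
  qed
  have "det M = - a * det (tri_mat (b#ms)) - det (tri_mat ms)" using dM d0 d1 by (simp add: cofactor_def)
  then show ?case using 3 by (simp add: M_def algebra_simps)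
qed

definition P2 :: "int list \<Rightarrow> bool" where "P2 ms = (\<forall>x\<in>set ms. x \<ge> 2)"

lemma cont_pos: "P2 ms \<Longrightarrow> cont ms \<ge> 1 \<and> cont (tl ms) \<le> cont ms"
proof (induction ms rule: cont.induct)
  case (3 a b ms)
  then have h: "a \<ge> 2" "cont (b#ms) \<ge> 1" "cont ms \<le> cont (b#ms)" by (auto simp: P2_def)
  have m: "a * cont (b#ms) \<ge> 2 * cont (b#ms)" using h by (intro mult_right_mono) auto
  have "1 \<le> a * cont (b#ms) - cont ms \<and> cont (b#ms) \<le> a * cont (b#ms) - cont ms" using h m by linarith
  then show ?case by simp
qed (auto simp: P2_def)

lemma bracket_cont: "P2 ms \<Longrightarrow> bracket ms = cont ms"
  using cont_pos[of ms] by (simp add: bracket_def det_tri abs_mult power_abs)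

lemma cont_inc: "cont (xs @ (y+1) # ys) = cont (xs @ y # ys) + cont xs * cont ys"
proof (induction xs rule: cont.induct)
  case 1
  then show ?case by (cases ys) (auto simp: algebra_simps)
next
  case (2 a)
  then show ?case by (cases ys) (auto simp: algebra_simps)
next
  case (3 a b ms)
  then show ?case by (simp add: algebra_simps)
qed

lemma P2_sub: "P2 ms \<Longrightarrow> set xs \<subseteq> set ms \<Longrightarrow> P2 xs" by (auto simp: P2_def)

lemma cont_drop_le: "P2 ms \<Longrightarrow> cont (drop m ms) \<le> cont ms"
proof (induction m)
  case (Suc m)
  have "P2 (drop m ms)" using Suc.prems by (rule P2_sub) (rule set_drop_subset)
  then have "cont (tl (drop m ms)) \<le> cont (drop m ms)" using cont_pos by blast
  then show ?case using Suc by (simp add: drop_Suc tl_drop)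
qed simp

lemma u_cont: "P2 ms \<Longrightarrow> 1 \<le> s \<Longrightarrow> u_seq ms s = cont (take (s-1) ms)"
  unfolding u_seq_def by (simp add: bracket_cont P2_sub set_take_subset)

lemma v_cont: "P2 ms \<Longrightarrow> s \<le> length ms \<Longrightarrow> v_seq ms s = cont (drop s ms)"
  unfolding v_seq_def by (simp add: bracket_cont P2_sub set_drop_subset)

theorem lemma4p5:
  fixes ns :: "int list" and j k :: nat
  assumes "\<forall>x\<in>set ns. x \<ge> 2"
    and "1 \<le> j" and "j \<le> k" and "k \<le> length ns - 1"
    and "ns ! (j - 1) \<ge> 3"
    and "u_seq ns j + u_seq ns (j + 1) + v_seq ns j + v_seq ns (j + 1) \<le> bracket ns"
  shows "let ns' = ns[k - 1 := ns ! (k - 1) + 1] in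
    u_seq ns' j + u_seq ns' (j + 1) + v_seq ns' j + v_seq ns' (j + 1) \<le> bracket ns'"
proof -
  define ns' where "ns' = ns[k - 1 := ns ! (k - 1) + 1]"
  define xs where "xs = take (k-1) ns"
  define y where "y = ns ! (k-1)"
  define ys where "ys = drop k ns"
  have kl: "k < length ns" using assms by linarith
  have P: "P2 ns" using assms(1) by (simp add: P2_def)
  have nsE: "ns = xs @ y # ys" unfolding xs_def y_def ys_def using kl assms
    using id_take_nth_drop[of "k-1" ns] assms(2,3) by simp
  have ns'E: "ns' = xs @ (y+1) # ys" unfolding ns'_def y_def xs_def ys_def
    using upd_conv_take_nth_drop[of "k-1" ns] kl assms(2,3) by simp
  have lxs: "length xs = k - 1" using kl by (simp add: xs_def)
  have P': "P2 ns'" using P unfolding nsE ns'E P2_def by auto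
  have Pxs: "P2 xs" "P2 ys" using P unfolding nsE P2_def by auto
  have len': "length ns' = length ns" by (simp add: ns'_def)
  have q': "bracket ns' = bracket ns + cont xs * cont ys"
    using P P' by (simp add: bracket_cont nsE ns'E cont_inc)
  have cx: "cont xs \<ge> 1" "cont ys \<ge> 1" using cont_pos Pxs by auto
  have old: "u_seq ns j + u_seq ns (j + 1) + v_seq ns j + v_seq ns (j + 1) =
     cont (take (j-1) ns) + cont (take j ns) + cont (drop j ns) + cont (drop (j+1) ns)"
    using P kl assms by (simp add: u_cont v_cont)
  have new: "u_seq ns' j + u_seq ns' (j + 1) + v_seq ns' j + v_seq ns' (j + 1) =
     cont (take (j-1) ns') + cont (take j ns') + cont (drop j ns') + cont (drop (j+1) ns')"
    using P' kl assms len' by (simp add: u_cont v_cont)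
  have inc: "cont (take (j-1) ns') + cont (take j ns') + cont (drop j ns') + cont (drop (j+1) ns')
     \<le> cont (take (j-1) ns) + cont (take j ns) + cont (drop j ns) + cont (drop (j+1) ns) + cont xs * cont ys"
  proof (cases "j = k")
    case True
    have "cont (xs @ [y+1]) = cont (xs @ [y]) + cont xs" using cont_inc[of xs y "[]"] by simp
    moreover have "cont xs \<le> cont xs * cont ys" using cx by simp
    ultimately show ?thesis using True lxs assms(2) unfolding nsE ns'E by simp
  next
    case False
    then have jk: "j < k" using assms by simp
    show ?thesis
    proof (cases "j + 1 = k")
      case True
      have "cont ys \<le> cont xs * cont ys" using cx by simp
      then show ?thesis using True lxs assms(2) cont_inc[of "[]" y ys] unfolding nsE ns'E by simp
    next
      case False
      then have jk2: "j + 1 < k" using jk by simp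
      define A where "A = cont (drop j xs)"
      define B where "B = cont (drop (j+1) xs)"
      have d1: "drop (j-1) xs = xs ! (j-1) # drop j xs" using jk2 lxs assms(2)
        using Cons_nth_drop_Suc[of "j-1" xs] by simp
      have d2: "drop j xs = xs ! j # drop (j+1) xs" using jk2 lxs
        using Cons_nth_drop_Suc[of j xs] by simp
      have jj: "j - 1 < k - 1" using jk2 assms(2) by linarith
      have n3: "xs ! (j-1) \<ge> 3" using assms(5) jj lxs unfolding nsE by (simp add: nth_append)
      have PA: "P2 (drop j xs)" using Pxs(1) by (rule P2_sub) (rule set_drop_subset)
      have AB: "A \<ge> 1" "B \<le> A" using cont_pos[OF PA] d2 unfolding A_def B_def by (auto simp del: cont.simps)
      have cd: "cont (drop (j-1) xs) = xs ! (j-1) * A - B" unfolding A_def B_def d1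
        using cont.simps(3)[of "xs ! (j-1)" "xs ! j" "drop (j+1) xs"] by (simp only: d2[symmetric])
      have "xs ! (j-1) * A \<ge> 3 * A" using n3 AB by (intro mult_right_mono) auto
      then have "A + B \<le> cont (drop (j-1) xs)" using cd AB by linarith
      also have "\<dots> \<le> cont xs" using cont_drop_le Pxs by blast
      finally have "(A + B) * cont ys \<le> cont xs * cont ys" using cx by (intro mult_right_mono) auto
      moreover have "cont (drop j ns') = cont (drop j ns) + A * cont ys"
        using jk2 lxs unfolding nsE ns'E A_def by (simp add: cont_inc)
      moreover have "cont (drop (j+1) ns') = cont (drop (j+1) ns) + B * cont ys"
        using jk2 lxs unfolding nsE ns'E B_def by (simp add: cont_inc)
      moreover have "take (j-1) ns' = take (j-1) ns" "take j ns' = take j ns"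
        using jk2 lxs unfolding nsE ns'E by simp_all
      ultimately show ?thesis by (simp add: algebra_simps)
    qed
  qed
  show ?thesis unfolding Let_def ns'_def[symmetric] using old new inc q' assms(6) by linarith
qed

end
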